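(* Given $n\in\mathbb N$ in unary, one can compute in polynomial time points $q_1,\dots,q_n\in\mathbb C$ with $|q_j|=1$ and rational real and imaginary parts, such that the only $(e_1,\dots,e_n)\in\mathbb Z^n$ with $q_1^{e_1}\cdots q_n^{e_n}=1$ is the zero vector. *)

theory Defs
  imports Complex_Main
begin

text \<open>A logarithmic-cost random access machine (RAM), used to express
  polynomial-time computability.  Memory cells are indexed by integers and hold
  integers; every operation is charged the bit lengths of the numbers involved
  (the standard log-cost RAM, polynomially equivalent to Turing machines).\<close>

fun bitlen_nat :: "nat \<Rightarrow> nat" where
  "bitlen_nat n = (if n \<le> 1 then 1 else Suc (bitlen_nat (n div 2)))"

definition bitlen :: "int \<Rightarrow> nat" where
  "bitlen z = bitlen_nat (nat \<bar>z\<bar>)"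

type_synonym mem = "int \<Rightarrow> int"

datatype binop = Plus | Minus | Times | Quot | Rem | Lt

fun apply_binop :: "binop \<Rightarrow> int \<Rightarrow> int \<Rightarrow> int" where
  "apply_binop Plus a b = a + b"
| "apply_binop Minus a b = a - b"
| "apply_binop Times a b = a * b"
| "apply_binop Quot a b = a div b"
| "apply_binop Rem a b = a mod b"
| "apply_binop Lt a b = (if a < b then 1 else 0)"

datatype expr = Const int | Load expr | Bin binop expr expr

fun eval :: "expr \<Rightarrow> mem \<Rightarrow> int \<times> nat" where
  "eval (Const c) s = (c, bitlen c)"
| "eval (Load e) s = (case eval e s of (a, t) \<Rightarrow> (s a, t + bitlen a + bitlen (s a) + 1))"
| "eval (Bin f e1 e2) s = (case eval e1 s of (a, t1) \<Rightarrow> case eval e2 s of (b, t2) \<Rightarrow>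
      (apply_binop f a b, t1 + t2 + bitlen a + bitlen b + 1))"

datatype com = Store expr expr | Seq com com | If expr com com | While expr com

inductive big :: "com \<Rightarrow> mem \<Rightarrow> mem \<Rightarrow> nat \<Rightarrow> bool" where
  Store: "eval e1 s = (a, t1) \<Longrightarrow> eval e2 s = (v, t2) \<Longrightarrow>
     big (Store e1 e2) s (s(a := v)) (t1 + t2 + bitlen a + bitlen v + 1)"
| Seq: "big c1 s s1 t1 \<Longrightarrow> big c2 s1 s2 t2 \<Longrightarrow> big (Seq c1 c2) s s2 (t1 + t2 + 1)"
| IfT: "eval b s = (v, t) \<Longrightarrow> v \<noteq> 0 \<Longrightarrow> big c1 s s' t' \<Longrightarrow> big (If b c1 c2) s s' (t + t' + 1)"
| IfF: "eval b s = (0, t) \<Longrightarrow> big c2 s s' t' \<Longrightarrow> big (If b c1 c2) s s' (t + t' + 1)"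
| WhileF: "eval b s = (0, t) \<Longrightarrow> big (While b c) s s (t + 1)"
| WhileT: "eval b s = (v, t) \<Longrightarrow> v \<noteq> 0 \<Longrightarrow> big c s s1 t1 \<Longrightarrow>
     big (While b c) s1 s2 t2 \<Longrightarrow> big (While b c) s s2 (t + t1 + t2 + 1)"

text \<open>Input convention: cell 0 holds \<open>n\<close>, all other cells are 0.
  (Time is measured as a function of \<open>n\<close>, i.e. of the unary input length.)\<close>
definition init_mem :: "nat \<Rightarrow> mem" where
  "init_mem n = (\<lambda>a. if a = 0 then int n else 0)"

definition out_point :: "mem \<Rightarrow> nat \<Rightarrow> complex" where
  "out_point s j = Complex (of_rat (Fract (s (4 * int j)) (s (4 * int j + 1))))
                           (of_rat (Fract (s (4 * int j + 2)) (s (4 * int j + 3))))"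

end

theory Submission
  imports Defs "HOL-Computational_Algebra.Primes" "HOL-Number_Theory.Cong"
begin


definition cg :: "int \<Rightarrow> int \<Rightarrow> complex \<Rightarrow> int \<Rightarrow> bool" where
  "cg b p w r \<longleftrightarrow> (\<exists>x y. w = Complex (of_int x) (of_int y) \<and> [x - y*b = r] (mod p))"

lemma cg_mult:
  assumes "cg b p w r" "cg b p w' r'" "p dvd b^2+1"
  shows "cg b p (w*w') (r*r')"
proof -
  obtain x y where w: "w = Complex (of_int x) (of_int y)" "[x - y*b = r] (mod p)" using assms(1) cg_def by auto
  obtain u v where w': "w' = Complex (of_int u) (of_int v)" "[u - v*b = r'] (mod p)" using assms(2) cg_def by auto
  have e: "w*w' = Complex (of_int (x*u - y*v)) (of_int (x*v+y*u))" using w w' by (simp add: complex_eq_iff)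
  have "[(x - y*b)*(u-v*b) = r*r'] (mod p)" using w(2) w'(2) by (simp add: cong_mult)
  moreover have "[(x*u - y*v) - (x*v+y*u)*b = (x - y*b)*(u-v*b)] (mod p)"
  proof -
    have "(x - y*b)*(u-v*b) - ((x*u - y*v) - (x*v+y*u)*b) = y*v*(b^2+1)" by (simp add: algebra_simps power2_eq_square)
    then have "p dvd (x - y*b)*(u-v*b) - ((x*u - y*v) - (x*v+y*u)*b)" using assms(3) by simp
    then show ?thesis by (simp add: cong_iff_dvd_diff dvd_diff_commute)
  qed
  ultimately show ?thesis unfolding cg_def e using cong_trans by blast
qed

lemma cg_one: "cg b p 1 1"
  unfolding cg_def by (rule exI[of _ 1], rule exI[of _ 0]) (simp add: one_complex.code)

lemma cg_power: "cg b p w r \<Longrightarrow> p dvd b^2+1 \<Longrightarrow> cg b p (w^m) (r^m)"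
  by (induction m) (auto simp: cg_one cg_mult)

lemma cg_prod: "finite A \<Longrightarrow> (\<And>k. k \<in> A \<Longrightarrow> cg b p (f k) (g k)) \<Longrightarrow> p dvd b^2+1 \<Longrightarrow>
   cg b p (\<Prod>k\<in>A. f k) (\<Prod>k\<in>A. g k)"
  by (induction A rule: finite_induct) (auto simp: cg_one cg_mult)

lemma cg_cnj: "cg (-b) p w r \<Longrightarrow> cg b p (cnj w) r"
  unfolding cg_def
  apply clarify
  subgoal for x y by (rule exI[of _ x], rule exI[of _ "-y"]) (simp add: complex_eq_iff)
  done

lemma cg_unique: "cg b p w r \<Longrightarrow> cg b p w r' \<Longrightarrow> [r = r'] (mod p)"
  unfolding cg_def by (metis complex.inject of_int_eq_iff cong_sym cong_trans)

lemma cg_z: "cg c p (Complex (of_int x) 1) (x - c)"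
  unfolding cg_def by (rule exI[of _ x], rule exI[of _ 1]) simp

lemma cg_cz: "cg c p (cnj (Complex (of_int x) 1)) (x + c)"
  unfolding cg_def by (rule exI[of _ x], rule exI[of _ "-1"]) (simp add: complex_eq_iff)

lemma indep:
  fixes a e :: "nat \<Rightarrow> int" and A :: "nat set"
  assumes fin: "finite A"
  and hp: "\<And>j. j \<in> A \<Longrightarrow> \<exists>p. prime p \<and> p dvd a j^2+1 \<and> \<not> p dvd 2*a j \<and> (\<forall>k\<in>A. k \<noteq> j \<longrightarrow> \<not> p dvd a k^2+1)"
  and pr: "(\<Prod>j\<in>A. (Complex (of_int (a j)) 1 / cnj (Complex (of_int (a j)) 1)) powi e j) = 1"
  shows "\<forall>j\<in>A. e j = 0"
proof (rule ccontr)
  define z where "z k = Complex (of_int (a k)) 1" for k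
  define m where "m k = nat \<bar>e k\<bar>" for k
  define L where "L k = (if e k \<ge> 0 then z k ^ m k else cnj (z k) ^ m k)" for k
  have zne: "z k \<noteq> 0" for k by (simp add: z_def complex_eq_iff)
  have Lne: "L k \<noteq> 0" for k using zne by (simp add: L_def)
  have each: "(z k / cnj (z k)) powi e k = L k / cnj (L k)" for k
  proof (cases "e k \<ge> 0")
    case True
    then have "e k = int (m k)" by (simp add: m_def)
    then show ?thesis using True by (simp add: L_def power_int_of_nat power_divide)
  next
    case False
    then have "e k = - int (m k)" by (simp add: m_def)
    then show ?thesis using False by (simp add: L_def power_int_minus power_int_of_nat power_divide)
  qed
  define LL where "LL = (\<Prod>k\<in>A. L k)"
  have "(\<Prod>j\<in>A. (z j / cnj (z j)) powi e j) = LL / cnj LL"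
    by (simp add: each LL_def prod_dividef)
  with pr have "LL / cnj LL = 1" by (simp add: z_def)
  moreover have "LL \<noteq> 0" using Lne fin by (simp add: LL_def)
  ultimately have LLc: "LL = cnj LL" by (simp add: divide_eq_1_iff)
  assume "\<not> (\<forall>j\<in>A. e j = 0)"
  then obtain j where jA: "j \<in> A" and ej: "e j \<noteq> 0" by auto
  obtain p where p: "prime p" "p dvd a j^2+1" "\<not> p dvd 2*a j" "\<forall>k\<in>A. k \<noteq> j \<longrightarrow> \<not> p dvd a k^2+1"
    using hp[OF jA] by blast
  define b where "b = (if e j > 0 then a j else - a j)"
  have b2: "b^2 = a j^2" by (simp add: b_def)
  have pb: "p dvd b^2+1" "p dvd (-b)^2+1" using p(2) b2 by auto
  define r1 where "r1 k = (if e k \<ge> 0 then (a k - b)^m k else (a k + b)^m k)" for k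
  define r2 where "r2 k = (if e k \<ge> 0 then (a k + b)^m k else (a k - b)^m k)" for k
  have c1: "cg b p (L k) (r1 k)" for k
    using cg_power[OF cg_z pb(1)] cg_power[OF cg_cz pb(1)]
    by (simp add: L_def r1_def z_def power_int_of_nat complex_cnj_power)
  have c2: "cg (-b) p (L k) (r2 k)" for k
    using cg_power[OF cg_z pb(2)] cg_power[OF cg_cz pb(2)]
    by (simp add: L_def r2_def z_def power_int_of_nat complex_cnj_power)
  have C1: "cg b p LL (\<Prod>k\<in>A. r1 k)" unfolding LL_def by (rule cg_prod[OF fin c1 pb(1)])
  have "cg (-b) p LL (\<Prod>k\<in>A. r2 k)" unfolding LL_def by (rule cg_prod[OF fin c2 pb(2)])
  then have "cg b p (cnj LL) (\<Prod>k\<in>A. r2 k)" by (intro cg_cnj) simp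
  then have C2: "cg b p LL (\<Prod>k\<in>A. r2 k)" using LLc by simp
  have cong: "[(\<Prod>k\<in>A. r1 k) = (\<Prod>k\<in>A. r2 k)] (mod p)" by (rule cg_unique[OF C1 C2])
  have mpos: "m j > 0" using ej by (simp add: m_def)
  have "r1 j = 0" using mpos ej by (auto simp: r1_def b_def)
  then have "p dvd (\<Prod>k\<in>A. r1 k)" using jA fin by (metis dvd_0_right prod_zero_iff)
  then have "p dvd (\<Prod>k\<in>A. r2 k)" using cong cong_dvd_iff by blast
  then obtain k where kA: "k \<in> A" and "p dvd r2 k" using prime_dvd_prod_iff[OF fin p(1)] by blast
  then have pk: "p dvd (if e k \<ge> 0 then a k + b else a k - b)"
    using p(1) prime_dvd_power by (cases "e k \<ge> 0") (auto simp: r2_def)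
  show False
  proof (cases "k = j")
    case True
    then have "p dvd 2 * a j" using pk ej by (auto simp: b_def split: if_splits)
    then show False using p(3) by simp
  next
    case False
    have "p dvd (a k + b) * (a k - b)" using pk by (auto split: if_splits)
    moreover have "(a k + b) * (a k - b) = (a k^2+1) - (b^2+1)" by (simp add: algebra_simps power2_eq_square)
    ultimately have "p dvd (a k^2+1) - (b^2+1)" by simp
    then have "p dvd a k^2+1" using pb(1) by (metis dvd_diff_commute dvd_add_right_iff diff_add_cancel)
    then show False using p(4) kA False by blast
  qed
qed

lemma prime_cond:
  fixes n j :: nat
  assumes jn: "j \<in> {1..n}"
  shows "\<exists>p. prime p \<and> p dvd (fact (2*n) * int j)^2+1 \<and> \<not> p dvd 2*(fact (2*n) * int j) \<and>
     (\<forall>k\<in>{1..n}. k \<noteq> j \<longrightarrow> \<not> p dvd (fact (2*n) * int k)^2+1)"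
proof -
  define F :: int where "F = fact (2*n)"
  have small: "q dvd F" if q: "prime q" "q dvd x" "0 < x" "x \<le> 2 * int n" for q x :: int
  proof -
    have "q \<le> x" using q by (simp add: zdvd_imp_le)
    moreover have "q > 0" using q(1) by (simp add: prime_gt_0_int)
    ultimately have "nat q dvd fact (2*n)" using q(4) by (intro dvd_fact) auto
    then have "int (nat q) dvd int (fact (2*n))" by (simp only: of_nat_dvd_iff)
    then show ?thesis using \<open>q > 0\<close> by (simp add: F_def of_nat_fact)
  qed
  have N: "(F * int j)^2 + 1 \<noteq> 0" "\<not> is_unit ((F * int j)^2 + 1)"
  proof -
    have "F \<ge> 1" by (simp add: F_def)
    moreover have "int j \<ge> 1" using jn by simp
    ultimately have "F * int j \<ge> 1" by (metis mult_1 mult_mono zero_le_one order_trans)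
    then have "(F * int j)^2 \<ge> 1" by (simp add: one_le_power)
    then show "(F * int j)^2 + 1 \<noteq> 0" "\<not> is_unit ((F * int j)^2 + 1)" using jn by auto
  qed
  obtain p where p: "prime p" "p dvd (F * int j)^2 + 1" using prime_divisor_exists[OF N] by blast
  have nF: "\<not> p dvd F"
  proof
    assume "p dvd F"
    then have "p dvd (F * int j)^2" by (simp add: power2_eq_square)
    with p(2) have "p dvd 1" by (simp add: dvd_add_right_iff)
    with p(1) show False using not_prime_unit by blast
  qed
  have "\<not> p dvd 2*(F * int j)"
  proof
    assume "p dvd 2*(F * int j)"
    then have "p dvd 2 \<or> p dvd F \<or> p dvd int j" using p(1) by (simp add: prime_dvd_mult_iff)
    moreover have "\<not> p dvd 2" using small[OF p(1), of 2] nF jn by auto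
    moreover have "\<not> p dvd int j" using small[OF p(1), of "int j"] nF jn by auto
    ultimately show False using nF by blast
  qed
  moreover have "\<not> p dvd (F * int k)^2+1" if k: "k \<in> {1..n}" "k \<noteq> j" for k
  proof
    assume pk: "p dvd (F * int k)^2+1"
    have "(int k)^2 * ((F * int j)^2 + 1) - (int j)^2 * ((F * int k)^2+1) = (int k - int j) * (int k + int j)"
      by (simp add: algebra_simps power2_eq_square)
    moreover have "p dvd (int k)^2 * ((F * int j)^2 + 1) - (int j)^2 * ((F * int k)^2+1)"
      using p(2) pk by simp
    ultimately have "p dvd (int k - int j) * (int k + int j)" by simp
    then have "p dvd (int k - int j) \<or> p dvd (int k + int j)" using p(1) by (simp add: prime_dvd_mult_iff)
    moreover have "\<not> p dvd (int k + int j)" using small[OF p(1), of "int k + int j"] nF jn k by auto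
    moreover have "\<not> p dvd (int k - int j)"
    proof
      assume "p dvd (int k - int j)"
      then have "p dvd \<bar>int k - int j\<bar>" by simp
      then show False using small[OF p(1), of "\<bar>int k - int j\<bar>"] nF jn k by fastforce
    qed
    ultimately show False by blast
  qed
  ultimately show ?thesis using p unfolding F_def by blast
qed



declare bitlen_nat.simps[simp del]

lemma bitlen_nat_bound: "n < 2^m \<Longrightarrow> bitlen_nat n \<le> m+1"
proof (induction m arbitrary: n)
  case 0 then show ?case by (subst bitlen_nat.simps) simp
next
  case (Suc m)
  show ?case
  proof (cases "n \<le> 1")
    case True then show ?thesis by (subst bitlen_nat.simps) simp
  next
    case False
    have "n div 2 < 2^m" using Suc.prems by auto
    then have "bitlen_nat (n div 2) \<le> m+1" by (rule Suc.IH)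
    then show ?thesis using False by (subst bitlen_nat.simps) simp
  qed
qed

lemma bitlen_bound: "\<bar>z\<bar> < 2^m \<Longrightarrow> bitlen z \<le> m+1"
  unfolding bitlen_def
  by (rule bitlen_nat_bound) (metis nat_less_iff abs_ge_zero of_nat_numeral of_nat_power)

lemma eval_Load: "eval (Load e) s = (s (fst (eval e s)), snd (eval e s) + bitlen (fst (eval e s)) + bitlen (s (fst (eval e s))) + 1)"
  by (simp split: prod.split)
lemma eval_Bin: "eval (Bin f e1 e2) s = (apply_binop f (fst (eval e1 s)) (fst (eval e2 s)),
   snd (eval e1 s) + snd (eval e2 s) + bitlen (fst (eval e1 s)) + bitlen (fst (eval e2 s)) + 1)"
  by (simp split: prod.split)
declare eval.simps(2,3)[simp del]

fun esize :: "expr \<Rightarrow> nat" where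
  "esize (Const c) = 1"
| "esize (Load e) = esize e + 1"
| "esize (Bin f e1 e2) = esize e1 + esize e2 + 1"

fun ok :: "nat \<Rightarrow> expr \<Rightarrow> mem \<Rightarrow> bool" where
  "ok K (Const c) s = (\<bar>c\<bar> < 2^K)"
| "ok K (Load e) s = (ok K e s \<and> \<bar>s (fst (eval e s))\<bar> < 2^K)"
| "ok K (Bin f e1 e2) s = (ok K e1 s \<and> ok K e2 s \<and>
     \<bar>apply_binop f (fst (eval e1 s)) (fst (eval e2 s))\<bar> < 2^K)"

lemma ok_val: "ok K e s \<Longrightarrow> \<bar>fst (eval e s)\<bar> < 2^K"
  by (induction e) (auto simp: eval_Load eval_Bin)

lemma ok_cost: "ok K e s \<Longrightarrow> snd (eval e s) \<le> esize e * (2*K+3)"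
proof (induction e)
  case (Const c) then show ?case using bitlen_bound[of c K] by simp
next
  case (Load e)
  then show ?case using ok_val[of K e s] bitlen_bound[of "fst (eval e s)" K] bitlen_bound[of "s (fst (eval e s))" K]
    by (simp add: eval_Load)
next
  case (Bin f e1 e2)
  then show ?case using ok_val[of K e1 s] ok_val[of K e2 s] bitlen_bound[of "fst (eval e1 s)" K] bitlen_bound[of "fst (eval e2 s)" K]
    by (simp add: eval_Bin algebra_simps)
qed

definition runs :: "com \<Rightarrow> mem \<Rightarrow> mem \<Rightarrow> nat \<Rightarrow> bool" where
  "runs c s s' T \<longleftrightarrow> (\<exists>t. big c s s' t \<and> t \<le> T)"

lemma runs_store: "ok K e1 s \<Longrightarrow> ok K e2 s \<Longrightarrow>
  runs (Store e1 e2) s (s(fst (eval e1 s) := fst (eval e2 s))) ((esize e1 + esize e2 + 1) * (2*K+3))"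
proof -
  assume a: "ok K e1 s" "ok K e2 s"
  have "big (Store e1 e2) s (s(fst (eval e1 s) := fst (eval e2 s)))
     (snd (eval e1 s) + snd (eval e2 s) + bitlen (fst (eval e1 s)) + bitlen (fst (eval e2 s)) + 1)"
    by (rule big.Store) auto
  moreover have "snd (eval e1 s) + snd (eval e2 s) + bitlen (fst (eval e1 s)) + bitlen (fst (eval e2 s)) + 1
     \<le> (esize e1 + esize e2 + 1) * (2*K+3)"
    using ok_cost[OF a(1)] ok_cost[OF a(2)] ok_val[OF a(1)] ok_val[OF a(2)]
      bitlen_bound[of "fst (eval e1 s)" K] bitlen_bound[of "fst (eval e2 s)" K]
    by (simp add: algebra_simps)
  ultimately show ?thesis unfolding runs_def by blast
qed

lemma runs_seq: "runs c1 s s1 T1 \<Longrightarrow> runs c2 s1 s2 T2 \<Longrightarrow> runs (Seq c1 c2) s s2 (T1+T2+1)"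
  unfolding runs_def using big.Seq by fastforce

lemma runs_mono: "runs c s s' T \<Longrightarrow> T \<le> T' \<Longrightarrow> runs c s s' T'"
  unfolding runs_def by fastforce

lemma runs_while:
  assumes b1: "\<And>j s. P j s \<Longrightarrow> j < N \<Longrightarrow> ok K b s \<and> fst (eval b s) \<noteq> 0"
  and b0: "\<And>s. P N s \<Longrightarrow> ok K b s \<and> fst (eval b s) = 0"
  and bc: "\<And>j s. P j s \<Longrightarrow> j < N \<Longrightarrow> \<exists>s'. runs c s s' Tc \<and> P (Suc j) s'"
  shows "P j s \<Longrightarrow> j \<le> N \<Longrightarrow> \<exists>s'. runs (While b c) s s' ((N - j)*(esize b*(2*K+3) + Tc + 1) + esize b*(2*K+3) + 1) \<and> P N s'"
proof (induction "N - j" arbitrary: j s)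
  case 0
  then have "j = N" by simp
  with 0 have "ok K b s \<and> fst (eval b s) = 0" using b0 by simp
  then have e: "eval b s = (0, snd (eval b s))" by (metis prod.collapse)
  have "big (While b c) s s (snd (eval b s) + 1)" by (rule big.WhileF[OF e])
  moreover have "snd (eval b s) \<le> esize b*(2*K+3)"
    using ok_cost[of K b s] \<open>ok K b s \<and> _\<close> by blast
  ultimately have "big (While b c) s s (snd (eval b s) + 1)" "snd (eval b s) \<le> esize b*(2*K+3)" by auto
  then show ?case using 0 \<open>j = N\<close> unfolding runs_def by fastforce
next
  case (Suc d)
  then have jN: "j < N" by simp
  have bb: "ok K b s" "fst (eval b s) \<noteq> 0" using b1[OF Suc.prems(1) jN] by auto
  obtain s1 where s1: "runs c s s1 Tc" "P (Suc j) s1" using bc[OF Suc.prems(1) jN] by blast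
  obtain s2 where s2: "runs (While b c) s1 s2 ((N - Suc j)*(esize b*(2*K+3) + Tc + 1) + esize b*(2*K+3) + 1)" "P N s2"
  proof -
    have "d = N - Suc j" using Suc.hyps(2) by simp
    from Suc.hyps(1)[OF this s1(2)] jN show ?thesis using that by auto
  qed
  obtain t1 where t1: "big c s s1 t1" "t1 \<le> Tc" using s1(1) runs_def by auto
  obtain t2 where t2: "big (While b c) s1 s2 t2" "t2 \<le> (N - Suc j)*(esize b*(2*K+3) + Tc + 1) + esize b*(2*K+3) + 1"
    using s2(1) runs_def by auto
  have "big (While b c) s s2 (snd (eval b s) + t1 + t2 + 1)"
    using big.WhileT[of b s "fst (eval b s)" "snd (eval b s)" c s1 t1 s2 t2] bb t1 t2 by simp
  moreover have "snd (eval b s) \<le> esize b*(2*K+3)" using ok_cost bb by blast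
  moreover have "snd (eval b s) + t1 + t2 + 1 \<le> (N - j)*(esize b*(2*K+3) + Tc + 1) + esize b*(2*K+3) + 1"
  proof -
    define D where "D = N - Suc j"
    define X where "X = esize b*(2*K+3)"
    have "N - j = Suc D" using jN by (simp add: D_def)
    moreover have "snd (eval b s) \<le> X" using ok_cost bb by (simp add: X_def)
    moreover have "t2 \<le> D*(X + Tc + 1) + X + 1" using t2(2) by (simp add: D_def X_def)
    ultimately show ?thesis using t1(2) by (simp add: X_def)
  qed
  ultimately show ?case using s2(2) unfolding runs_def by blast
qed



definition "b1 = Bin Lt (Load (Const (-2))) (Bin Plus (Bin Times (Const 2) (Load (Const 0))) (Const 1))"
definition "c1 = Seq (Store (Const (-1)) (Bin Times (Load (Const (-1))) (Load (Const (-2)))))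
                     (Store (Const (-2)) (Bin Plus (Load (Const (-2))) (Const 1)))"
definition "P1 n j (s::mem) \<longleftrightarrow> s 0 = int n \<and> s (-1) = fact j \<and> s (-2) = int j + 1"

lemma runs_seq_store: "runs c (s(fst (eval e1 s) := fst (eval e2 s))) s2 T2 \<Longrightarrow> ok K e1 s \<Longrightarrow> ok K e2 s \<Longrightarrow>
   runs (Seq (Store e1 e2) c) s s2 ((esize e1 + esize e2 + 1) * (2*K+3) + T2 + 1)"
  by (rule runs_seq[OF runs_store])

lemma loop1:
  assumes hK: "(16::int) \<le> 2^K" and hn: "2 * int n + 2 < 2^K" and hf: "(fact (2*n) :: int) < 2^K"
  shows "P1 n 0 s \<Longrightarrow> \<exists>s'. runs (While b1 c1) s s' ((2*n)*(esize b1*(2*K+3) + 14*(2*K+3) + 1) + esize b1*(2*K+3) + 1) \<and> P1 n (2*n) s'"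
proof -
  assume p0: "P1 n 0 s"
  have hn': "n < (2::nat)^K"
  proof -
    have "int n < 2^K" using hn by linarith
    then show ?thesis by (metis of_nat_less_iff of_nat_numeral of_nat_power)
  qed
  have fb: "(fact j :: int) < 2^K" if "j \<le> 2*n" for j
    using hf that by (smt (verit) fact_mono of_nat_fact of_nat_le_iff)
  have "\<exists>s'. runs (While b1 c1) s s' ((2*n - 0)*(esize b1*(2*K+3) + 14*(2*K+3) + 1) + esize b1*(2*K+3) + 1) \<and> P1 n (2*n) s'"
  proof (rule runs_while[where P = "P1 n" and N = "2*n" and j = 0])
    fix j s assume "P1 n j s" "j < 2*n"
    then show "ok K b1 s \<and> fst (eval b1 s) \<noteq> 0"
      using hK hn hn' by (simp add: b1_def P1_def eval_Load eval_Bin eval.simps)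
  next
    fix s assume "P1 n (2*n) s"
    then show "ok K b1 s \<and> fst (eval b1 s) = 0"
      using hK hn hn' by (simp add: b1_def P1_def eval_Load eval_Bin eval.simps)
  next
    fix j s assume a: "P1 n j s" "j < 2*n"
    have f1: "(fact j :: int) * (int j + 1) < 2^K" using fb[of "Suc j"] a(2) by (simp add: algebra_simps)
    have f0: "(fact j :: int) < 2^K" using fb[of j] a(2) by simp
    show "\<exists>s'. runs c1 s s' (14*(2*K+3)) \<and> P1 n (Suc j) s'"
      unfolding c1_def
      apply (rule exI, rule conjI, rule runs_mono, rule runs_seq_store[where K=K], rule runs_store[where K=K])
      using a f1 f0 hK hn hn' apply (simp_all add: P1_def eval_Load eval_Bin eval.simps)
      done
  next
    show "P1 n 0 s" by (rule p0)
  qed simp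
  then show ?thesis by simp
qed

definition "b2 = Bin Lt (Load (Const (-2))) (Bin Plus (Load (Const 0)) (Const 1))"
definition "c2 =
  Seq (Store (Const (-3)) (Bin Times (Load (Const (-1))) (Load (Const (-2)))))
 (Seq (Store (Bin Times (Const 4) (Load (Const (-2)))) (Bin Minus (Bin Times (Load (Const (-3))) (Load (Const (-3)))) (Const 1)))
 (Seq (Store (Bin Plus (Bin Times (Const 4) (Load (Const (-2)))) (Const 1)) (Bin Plus (Bin Times (Load (Const (-3))) (Load (Const (-3)))) (Const 1)))
 (Seq (Store (Bin Plus (Bin Times (Const 4) (Load (Const (-2)))) (Const 2)) (Bin Times (Const 2) (Load (Const (-3)))))
 (Seq (Store (Bin Plus (Bin Times (Const 4) (Load (Const (-2)))) (Const 3)) (Bin Plus (Bin Times (Load (Const (-3))) (Load (Const (-3)))) (Const 1)))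
      (Store (Const (-2)) (Bin Plus (Load (Const (-2))) (Const 1)))))))"
definition "P2 n F j (s::mem) \<longleftrightarrow> s 0 = int n \<and> s (-1) = F \<and> s (-2) = int j + 1 \<and>
  (\<forall>k. 1 \<le> k \<and> k \<le> j \<longrightarrow> s (4*int k) = (F*int k)^2 - 1 \<and> s (4*int k+1) = (F*int k)^2 + 1 \<and>
        s (4*int k+2) = 2*(F*int k) \<and> s (4*int k+3) = (F*int k)^2 + 1)"

lemma P2_step:
  assumes "P2 n F j s" "s' 0 = int n" "s' (-1) = F" "s' (-2) = int j + 2"
   "s' (4*int j + 4) = (F*(int j + 1))^2 - 1" "s' (4*int j + 5) = (F*(int j + 1))^2 + 1"
   "s' (4*int j + 6) = 2*(F*(int j + 1))" "s' (4*int j + 7) = (F*(int j + 1))^2 + 1"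
   "\<And>a. 0 < a \<Longrightarrow> a < 4*int j + 4 \<Longrightarrow> s' a = s a"
  shows "P2 n F (Suc j) s'"
proof -
  have "\<forall>k. 1 \<le> k \<and> k \<le> Suc j \<longrightarrow> s' (4*int k) = (F*int k)^2 - 1 \<and> s' (4*int k+1) = (F*int k)^2 + 1 \<and>
        s' (4*int k+2) = 2*(F*int k) \<and> s' (4*int k+3) = (F*int k)^2 + 1"
  proof (intro allI impI)
  fix k assume k: "1 \<le> k \<and> k \<le> Suc j"
  show "s' (4*int k) = (F*int k)^2 - 1 \<and> s' (4*int k+1) = (F*int k)^2 + 1 \<and>
        s' (4*int k+2) = 2*(F*int k) \<and> s' (4*int k+3) = (F*int k)^2 + 1"
  proof (cases "k = Suc j")
    case True
    then show ?thesis using assms(5-8) by (simp add: add.commute add.left_commute)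
  next
    case False
    then have "k \<le> j" "1 \<le> k" using k by auto
    then show ?thesis using assms(1) assms(9)[of "4*int k"] assms(9)[of "4*int k+1"] assms(9)[of "4*int k+2"] assms(9)[of "4*int k+3"]
      unfolding P2_def by auto
  qed
  qed
  then show ?thesis using assms(2-4) unfolding P2_def by simp
qed

lemma body2:
  assumes hK: "(16::int) \<le> 2^K" and hn: "4 * int n + 8 < 2^K" and hn': "n < (2::nat)^K"
  and a: "P2 n F j s" "j < n" and F0: "0 \<le> F" and A0: "0 \<le> F * (int j + 1)" and AA: "F * (int j + 1) * (F * (int j + 1)) + 1 < 2^K"
  shows "\<exists>s'. runs c2 s s' (70*(2*K+3)) \<and> P2 n F (Suc j) s'"
proof -
  define A where "A = F * (int j + 1)"
  have b: "\<bar>A\<bar> < 2^K" "\<bar>A*A - 1\<bar> < 2^K" "\<bar>A*A + 1\<bar> < 2^K" "\<bar>2*A\<bar> < 2^K"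
  proof -
    have A0': "0 \<le> A" and AA': "A*A + 1 < 2^K" using A0 AA by (simp_all add: A_def)
    have "A \<le> A*A + 1" using A0' by (smt (verit) mult_le_cancel_left1 mult_nonneg_nonneg)
    moreover have "0 \<le> A*A" using A0' by simp
    moreover have "2*A \<le> A*A + 1"
    proof -
      have "0 \<le> (A-1)*(A-1)" by simp
      then show ?thesis by (simp add: algebra_simps)
    qed
    ultimately show "\<bar>A\<bar> < 2^K" "\<bar>A*A - 1\<bar> < 2^K" "\<bar>A*A + 1\<bar> < 2^K" "\<bar>2*A\<bar> < 2^K"
      using A0' AA' hK by (simp_all add: abs_if)
  qed
  have bF: "\<bar>F\<bar> < 2^K"
  proof -
    have "F \<le> F * (int j + 1)" using F0 by (simp add: mult_le_cancel_left1)
    then show ?thesis using b(1) F0 unfolding A_def by simp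
  qed
  have ss: "s 0 = int n" "s (-1) = F" "s (-2) = int j + 1" using a(1) by (simp_all add: P2_def)
  show ?thesis
    unfolding c2_def
    apply (rule exI, rule conjI, rule runs_mono)
    apply (rule runs_seq_store[where K=K])+
    apply (rule runs_store[where K=K])
    using a b bF hK hn hn' ss apply (simp_all add: eval_Load eval_Bin eval.simps A_def)
    apply (rule P2_step[OF a(1)])
    using a(1) by (simp_all add: P2_def A_def power2_eq_square)
qed

lemma loop2:
  assumes hK: "(16::int) \<le> 2^K" and hn: "4 * int n + 8 < 2^K" and hn': "n < (2::nat)^K"
  and F0: "0 \<le> F" and hAA: "\<And>j. j < n \<Longrightarrow> F * (int j + 1) * (F * (int j + 1)) + 1 < 2^K"
  shows "P2 n F 0 s \<Longrightarrow> \<exists>s'. runs (While b2 c2) s s' (n*(esize b2*(2*K+3) + 70*(2*K+3) + 1) + esize b2*(2*K+3) + 1) \<and> P2 n F n s'"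
proof -
  assume p0: "P2 n F 0 s"
  have "\<exists>s'. runs (While b2 c2) s s' ((n - 0)*(esize b2*(2*K+3) + 70*(2*K+3) + 1) + esize b2*(2*K+3) + 1) \<and> P2 n F n s'"
  proof (rule runs_while[where P = "P2 n F" and N = "n" and j = 0])
    fix j s assume "P2 n F j s" "j < n"
    then show "ok K b2 s \<and> fst (eval b2 s) \<noteq> 0"
      using hK hn hn' by (simp add: b2_def P2_def eval_Load eval_Bin eval.simps)
  next
    fix s assume "P2 n F n s"
    then show "ok K b2 s \<and> fst (eval b2 s) = 0"
      using hK hn hn' by (simp add: b2_def P2_def eval_Load eval_Bin eval.simps)
  next
    fix j s assume a: "P2 n F j s" "j < n"
    show "\<exists>s'. runs c2 s s' (70*(2*K+3)) \<and> P2 n F (Suc j) s'"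
      by (rule body2[OF hK hn hn' a F0 _ hAA[OF a(2)]]) (use F0 in simp)
  next
    show "P2 n F 0 s" by (rule p0)
  qed simp
  then show ?thesis by simp
qed



definition "prog = Seq (Store (Const (-1)) (Const 1)) (Seq (Store (Const (-2)) (Const 1))
   (Seq (While b1 c1) (Seq (Store (Const (-2)) (Const 1)) (While b2 c2))))"

lemma fact_bound: "(fact (2*n) :: int) \<le> 2^(4*n*n)"
proof -
  have "fact (2*n) \<le> (2*n)^(2*n)" by (rule fact_le_power[where 'a=nat, simplified])
  also have "(2*n)^(2*n) \<le> (2^(2*n) :: nat)^(2*n)" by (intro power_mono) (auto intro: less_imp_le less_exp)
  also have "\<dots> = 2^(4*n*n)" by (simp add: power_mult[symmetric] mult.assoc mult.left_commute)
  finally have "fact (2*n) \<le> (2^(4*n*n) :: nat)" .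
  then have "int (fact (2*n)) \<le> int (2^(4*n*n))" by (simp only: of_nat_le_iff)
  then show ?thesis by (simp add: of_nat_fact)
qed

lemma numeric:
  fixes n :: nat
  defines "K \<equiv> 10*(n+1)^2"
  shows "(16::int) \<le> 2^K" "4 * int n + 8 < 2^K" "n < (2::nat)^K" "(fact (2*n) :: int) < 2^K"
    "\<And>j. j < n \<Longrightarrow> (fact (2*n)::int) * (int j + 1) * (fact (2*n) * (int j + 1)) + 1 < 2^K"
proof -
  have K10: "K \<ge> 10" unfolding K_def by (simp add: power2_eq_square)
  have "(16::int) \<le> 2^4" by simp
  also have "(2::int)^4 \<le> 2^K" using K10 by (intro power_increasing) auto
  finally show "(16::int) \<le> 2^K" .
  have "4*n+8 < (2::nat)^(4*n+8)" by (rule less_exp)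
  also have "(2::nat)^(4*n+8) \<le> 2^K" by (intro power_increasing) (auto simp: K_def power2_eq_square)
  finally have h: "4*n+8 < (2::nat)^K" .
  then have "int (4*n+8) < int (2^K)" by (simp only: of_nat_less_iff)
  then show "4 * int n + 8 < 2^K" by simp
  show "n < (2::nat)^K" using h by simp
  have F: "(fact (2*n) :: int) \<le> 2^(4*n*n)" by (rule fact_bound)
  have "(2::int)^(4*n*n) < 2^K" by (intro power_strict_increasing) (auto simp: K_def power2_eq_square)
  with F show "(fact (2*n) :: int) < 2^K" by linarith
  fix j assume j: "j < n"
  define A :: int where "A = fact (2*n) * (int j + 1)"
  have "int j + 1 \<le> int n" using j by simp
  also have "int n \<le> 2^n" using less_exp[of n] by (metis less_imp_le of_nat_le_iff of_nat_numeral of_nat_power)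
  finally have j1: "int j + 1 \<le> 2^n" .
  have A0: "0 \<le> A" by (simp add: A_def)
  have "A \<le> 2^(4*n*n) * 2^n" unfolding A_def using F j1 by (intro mult_mono) auto
  also have "\<dots> = 2^(4*n*n+n)" by (simp add: power_add)
  finally have A1: "A \<le> 2^(4*n*n+n)" .
  have "A*A \<le> 2^(4*n*n+n) * 2^(4*n*n+n)" using A0 A1 by (intro mult_mono) auto
  also have "\<dots> = 2^(8*n*n+2*n)" by (simp add: power_add[symmetric])
  finally have "A*A + 1 \<le> 2^(8*n*n+2*n) + 1" by simp
  also have "(2::int)^(8*n*n+2*n) + 1 < 2^(8*n*n+2*n) + 2^(8*n*n+2*n)"
  proof -
    have "0 < 8*n*n+2*n" using j by simp
    then have "1 < (2::int)^(8*n*n+2*n)" by (intro one_less_power) auto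
    then show ?thesis by simp
  qed
  also have "\<dots> = 2^(8*n*n+2*n+1)" by simp
  also have "(2::int)^(8*n*n+2*n+1) \<le> 2^K" by (intro power_increasing) (auto simp: K_def power2_eq_square)
  finally show "(fact (2*n)::int) * (int j + 1) * (fact (2*n) * (int j + 1)) + 1 < 2^K" by (simp add: A_def)
qed

lemma time_bound:
  fixes n X :: nat
  assumes X: "X = 2*(10*(n+1)^2)+3"
  shows "3*X + (3*X + ((2*n)*(9*X + 14*X + 1) + 9*X + 1 + (3*X + (n*(7*X + 70*X + 1) + 7*X + 1) + 1) + 1) + 1) + 1
         \<le> 4000*(n+1)^3"
proof -
  define M where "M = n+1"
  have X1: "1 \<le> X" using X by simp
  have eq: "3*X + (3*X + ((2*n)*(9*X + 14*X + 1) + 9*X + 1 + (3*X + (n*(7*X + 70*X + 1) + 7*X + 1) + 1) + 1) + 1) + 1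
     = 25*X + 123*(n*X) + 3*n + 6" by (simp add: algebra_simps)
  have a: "n*X \<le> M*X" by (simp add: M_def)
  have b: "X \<le> M*X" by (simp add: M_def)
  have c: "n \<le> M*X" using X1 a by (metis le_trans mult.right_neutral mult_le_mono2)
  have d: "1 \<le> M*X" using X1 by (simp add: M_def)
  have "25*X + 123*(n*X) + 3*n + 6 \<le> 158*(M*X)" using a b c d by linarith
  also have "M*X \<le> M*(23*(M*M))"
  proof -
    have "X \<le> 23*(M*M)" using X by (simp add: M_def power2_eq_square algebra_simps)
    then show ?thesis by (rule mult_le_mono2)
  qed
  also have "158*(M*(23*(M*M))) \<le> 4000*M^3" by (simp add: power3_eq_cube)
  finally have "25*X + 123*(n*X) + 3*n + 6 \<le> 4000*(n+1)^3" by (simp add: M_def)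
  then show ?thesis by (subst eq)
qed

lemma out_point_eq:
  assumes "s (4*int j) = A^2 - 1" "s (4*int j+1) = A^2 + 1" "s (4*int j+2) = 2*A" "s (4*int j+3) = A^2 + 1"
  shows "out_point s j = Complex (of_int A) 1 / cnj (Complex (of_int A) 1)"
proof -
  have d: "(of_int A :: real)^2 + 1 \<noteq> 0" by (smt (verit) zero_le_power2)
  have d': "(of_int A :: real) * of_int A + 1 \<noteq> 0" using d by (simp add: power2_eq_square)
  show ?thesis
    unfolding out_point_def assms Fract_of_int_quotient of_rat_divide of_rat_of_int_eq
    using d d' by (simp add: complex_eq_iff Re_divide Im_divide complex_norm_square[symmetric] cmod_def power2_eq_square field_simps)
qed

lemma cmod_q: "cmod (Complex (of_int A) 1 / cnj (Complex (of_int A) 1)) = 1"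
proof -
  have "Complex (of_int A) 1 \<noteq> 0" by (simp add: complex_eq_iff)
  then show ?thesis by (simp add: norm_divide)
qed

lemma main_n:
  fixes n :: nat
  shows "\<exists>s' t.
    big prog (init_mem n) s' t \<and> t \<le> 4000 * (n + 1) ^ 3 \<and>
    (\<forall>j\<in>{1..n}. cmod (out_point s' j) = 1) \<and>
    (\<forall>e :: nat \<Rightarrow> int. (\<Prod>j=1..n. out_point s' j powi e j) = 1 \<longrightarrow> (\<forall>j\<in>{1..n}. e j = 0))"
proof -
  define K where "K = 10*(n+1)^2"
  define F :: int where "F = fact (2*n)"
  define X where "X = 2*K+3"
  note num = numeric[where n=n, folded K_def]
  have F0: "0 \<le> F" by (simp add: F_def)
  define s1 where "s1 = (init_mem n)(-1 := 1)"
  define s2 where "s2 = s1(-2 := 1)"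
  have r1: "runs (Store (Const (-1)) (Const 1)) (init_mem n) s1 (3*X)"
    using runs_store[of K "Const (-1)" "init_mem n" "Const 1"] num(1)
    by (simp add: s1_def X_def eval.simps)
  have r2: "runs (Store (Const (-2)) (Const 1)) s1 s2 (3*X)"
    using runs_store[of K "Const (-2)" s1 "Const 1"] num(1)
    by (simp add: s2_def X_def eval.simps)
  have p0: "P1 n 0 s2" by (simp add: P1_def s2_def s1_def init_mem_def)
  have e1: "esize b1 = 9" by (simp add: b1_def)
  have hn2: "2 * int n + 2 < 2^K" using num(2) by linarith
  obtain s3 where r3': "runs (While b1 c1) s2 s3 ((2*n)*(esize b1*(2*K+3) + 14*(2*K+3) + 1) + esize b1*(2*K+3) + 1)" and p3: "P1 n (2*n) s3"
    using loop1[OF num(1) hn2 num(4) p0] by blast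
  have r3: "runs (While b1 c1) s2 s3 ((2*n)*(9*X + 14*X + 1) + 9*X + 1)" using r3' unfolding e1 X_def .
  define s4 where "s4 = s3(-2 := 1)"
  have r4: "runs (Store (Const (-2)) (Const 1)) s3 s4 (3*X)"
    using runs_store[of K "Const (-2)" s3 "Const 1"] num(1)
    by (simp add: s4_def X_def eval.simps)
  have p4: "P2 n F 0 s4" using p3 by (simp add: P1_def P2_def s4_def F_def)
  have hAA: "\<And>j. j < n \<Longrightarrow> F*(int j+1)*(F*(int j+1)) + 1 < 2^K" 
  proof -
    fix j :: nat assume "j < n"
    from num(5)[OF this] show "F*(int j+1)*(F*(int j+1)) + 1 < 2^K" by (simp add: F_def K_def)
  qed
  have e2: "esize b2 = 7" by (simp add: b2_def)
  obtain s5 where r5': "runs (While b2 c2) s4 s5 (n*(esize b2*(2*K+3) + 70*(2*K+3) + 1) + esize b2*(2*K+3) + 1)" and p5: "P2 n F n s5"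
    using loop2[OF num(1) num(2) num(3) F0 hAA p4] by blast
  have r5: "runs (While b2 c2) s4 s5 (n*(7*X + 70*X + 1) + 7*X + 1)" using r5' unfolding e2 X_def .
  have "runs prog (init_mem n) s5 (3*X + (3*X + (((2*n)*(9*X + 14*X + 1) + 9*X + 1) + (3*X + (n*(7*X + 70*X + 1) + 7*X + 1) + 1) + 1) + 1) + 1)"
    unfolding prog_def by (rule runs_seq[OF r1 runs_seq[OF r2 runs_seq[OF r3 runs_seq[OF r4 r5]]]])
  then obtain t where t: "big prog (init_mem n) s5 t" "t \<le> 4000*(n+1)^3"
    using time_bound[of X n] unfolding runs_def X_def K_def by fastforce
  have op: "out_point s5 j = Complex (of_int (F * int j)) 1 / cnj (Complex (of_int (F * int j)) 1)" if "j \<in> {1..n}" for j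
    by (rule out_point_eq) (use p5 that in \<open>auto simp: P2_def\<close>)
  show ?thesis
  proof (intro exI[of _ s5] exI[of _ t])
  show "big prog (init_mem n) s5 t \<and> t \<le> 4000 * (n + 1) ^ 3 \<and>
    (\<forall>j\<in>{1..n}. cmod (out_point s5 j) = 1) \<and>
    (\<forall>e :: nat \<Rightarrow> int. (\<Prod>j=1..n. out_point s5 j powi e j) = 1 \<longrightarrow> (\<forall>j\<in>{1..n}. e j = 0))"
  proof (intro conjI allI impI ballI)
    show "big prog (init_mem n) s5 t" "t \<le> 4000 * (n + 1) ^ 3" using t by auto
  next
    fix j assume "j \<in> {1..n}"
    then show "cmod (out_point s5 j) = 1" using op[of j] cmod_q[of "F * int j"] by simp
  next
    fix e :: "nat \<Rightarrow> int" and j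
    assume pr: "(\<Prod>j=1..n. out_point s5 j powi e j) = 1" and j: "j \<in> {1..n}"
    have "(\<Prod>j\<in>{1..n}. (Complex (of_int (F * int j)) 1 / cnj (Complex (of_int (F * int j)) 1)) powi e j) = 1"
      using pr op by (metis (no_types, lifting) prod.cong)
    moreover have hp: "\<And>j. j \<in> {1..n} \<Longrightarrow> \<exists>p. prime p \<and> p dvd (F*int j)^2+1 \<and> \<not> p dvd 2*(F*int j) \<and>
       (\<forall>k\<in>{1..n}. k \<noteq> j \<longrightarrow> \<not> p dvd (F*int k)^2+1)" unfolding F_def by (rule prime_cond)
    ultimately have "\<forall>j\<in>{1..n}. e j = 0"
      using indep[of "{1..n}" "\<lambda>j. F * int j" e] by simp
    then show "e j = 0" using j by blast
  qed
  qed
qed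

theorem mainTheorem13:
  shows "\<exists>prog :: com. \<exists>c k :: nat. \<forall>n :: nat. \<exists>s' t.
    big prog (init_mem n) s' t \<and> t \<le> c * (n + 1) ^ k \<and>
    (\<forall>j\<in>{1..n}. cmod (out_point s' j) = 1) \<and>
    (\<forall>e :: nat \<Rightarrow> int. (\<Prod>j=1..n. out_point s' j powi e j) = 1 \<longrightarrow> (\<forall>j\<in>{1..n}. e j = 0))"
  using main_n by blast


end
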